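(* For every $\delta>0$, $$D(\mathbf c,Q+\delta\,\mathrm{id}_E)\le D(\mathbf c,Q)=\lim_{\delta\downarrow0}D(\mathbf c,Q+\delta\,\mathrm{id}_E).$$ In particular $\delta\mapsto D(\mathbf c,Q+\delta\,\mathrm{id}_E)$ is non-increasing on $[0,\infty)$ and right-continuous at $0$. The same statements hold with $D$ replaced by $D_g$ or by $D_s$.
   Context: Let $E_i=\mathbb{R}^{d_i}$, $E=\bigoplus_{i=1}^n E_i$, $\pi_i:E\to E_i$ the coordinate projection. Fix a symmetric linear map $Q$ on $E$ and positive reals $\mathbf c=(c_i)_{i=1}^n$. $\mathcal P(E_i)$: Borel probability measures on $E_i$ absolutely continuous w.r.t. Lebesgue with finite second moments; $h(\mu_i)=-\int\rho_i\log\rho_i$ for density $\rho_i$. $\Pi(\mu_1,\dots,\mu_n)$: probability measures $\mu$ on $E$ with $\pi_i\sharp\mu=\mu_i$. Inequality $(\star)$: $\sum_i c_ih(\mu_i)\le\sup_{\mu\in\Pi(\mu_1,\dots,\mu_n)}\int_E\langle x,Qx\rangle d\mu+D$. $D(\mathbf c,Q)$, $D_g(\mathbf c,Q)$, $D_s(\mathbf c,Q)\in\mathbb R\cup\{+\infty\}$ are the smallest constants $D$ for which $(\star)$ holds for all centered $\mu_i\in\mathcal P(E_i)$, for all centered nondegenerate Gaussian $\mu_i$, and for all symmetric $\mu_i\in\mathcal P(E_i)$ (i.e. $\mu_i(B)=\mu_i(-B)$ for Borel $B$), respectively. *)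

theory Defs
  imports "HOL-Probability.Probability"
begin

text \<open>The block space E_i = R^(d i) is modelled as the product
  measure space Eb d i = PiM {..<d i} (\<lambda>_. lborel) (Lebesgue measure on R^(d i)),
  the total space E = (+)_{i<n} E_i as Etot d n = PiM {..<n} (\<lambda>i. Eb d i);
  the coordinate projection pi_i is (\<lambda>x. x i).  A linear map on E is given by its
  matrix Q indexed by pairs (block i, coordinate a), with a < d i.\<close>

definition Eb :: "(nat \<Rightarrow> nat) \<Rightarrow> nat \<Rightarrow> (nat \<Rightarrow> real) measure" where
  "Eb d i = PiM {..<d i} (\<lambda>_. lborel)"

definition Etot :: "(nat \<Rightarrow> nat) \<Rightarrow> nat \<Rightarrow> (nat \<Rightarrow> nat \<Rightarrow> real) measure" where
  "Etot d n = PiM {..<n} (\<lambda>i. Eb d i)"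

definition quad :: "(nat \<Rightarrow> nat) \<Rightarrow> nat \<Rightarrow> (nat \<times> nat \<Rightarrow> nat \<times> nat \<Rightarrow> real)
    \<Rightarrow> (nat \<Rightarrow> nat \<Rightarrow> real) \<Rightarrow> real" where
  "quad d n Q x = (\<Sum>i<n. \<Sum>a<d i. \<Sum>j<n. \<Sum>b<d j. x i a * Q (i,a) (j,b) * x j b)"

definition symmetric_map :: "(nat \<Rightarrow> nat) \<Rightarrow> nat \<Rightarrow> (nat \<times> nat \<Rightarrow> nat \<times> nat \<Rightarrow> real) \<Rightarrow> bool" where
  "symmetric_map d n Q \<longleftrightarrow> (\<forall>i<n. \<forall>a<d i. \<forall>j<n. \<forall>b<d j. Q (i,a) (j,b) = Q (j,b) (i,a))"

definition shift_id :: "(nat \<times> nat \<Rightarrow> nat \<times> nat \<Rightarrow> real) \<Rightarrow> real \<Rightarrow> (nat \<times> nat \<Rightarrow> nat \<times> nat \<Rightarrow> real)" where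
  "shift_id Q \<delta> = (\<lambda>p q. Q p q + (if p = q then \<delta> else 0))"

text \<open>Differential entropy h(mu) = - \<integral> rho log rho, with rho the Lebesgue density,
  as an extended real (positive part minus negative part of -rho log rho).\<close>
definition entropy_h :: "(nat \<Rightarrow> nat) \<Rightarrow> nat \<Rightarrow> (nat \<Rightarrow> real) measure \<Rightarrow> ereal" where
  "entropy_h d i \<mu> =
     (let \<rho> = (\<lambda>x. enn2real (RN_deriv (Eb d i) \<mu> x)) in
      enn2ereal (\<integral>\<^sup>+ x. ennreal (\<rho> x * max 0 (- ln (\<rho> x))) \<partial>Eb d i)
      - enn2ereal (\<integral>\<^sup>+ x. ennreal (\<rho> x * max 0 (ln (\<rho> x))) \<partial>Eb d i))"

definition in_P :: "(nat \<Rightarrow> nat) \<Rightarrow> nat \<Rightarrow> (nat \<Rightarrow> real) measure \<Rightarrow> bool" where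
  "in_P d i \<mu> \<longleftrightarrow> sets \<mu> = sets (Eb d i) \<and> prob_space \<mu> \<and> absolutely_continuous (Eb d i) \<mu>
     \<and> (\<integral>\<^sup>+ x. ennreal (\<Sum>a<d i. (x a)\<^sup>2) \<partial>\<mu>) < \<infinity>"

definition centered :: "(nat \<Rightarrow> nat) \<Rightarrow> nat \<Rightarrow> (nat \<Rightarrow> real) measure \<Rightarrow> bool" where
  "centered d i \<mu> \<longleftrightarrow> (\<forall>a<d i. (\<integral>x. x a \<partial>\<mu>) = 0)"

definition symmetric_meas :: "(nat \<Rightarrow> nat) \<Rightarrow> nat \<Rightarrow> (nat \<Rightarrow> real) measure \<Rightarrow> bool" where
  "symmetric_meas d i \<mu> \<longleftrightarrow>
     (\<forall>B\<in>sets (Eb d i). emeasure \<mu> B = emeasure \<mu> ((\<lambda>x. \<lambda>a\<in>{..<d i}. - x a) ` B))"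

definition std_gauss :: "(nat \<Rightarrow> nat) \<Rightarrow> nat \<Rightarrow> (nat \<Rightarrow> real) measure" where
  "std_gauss d i = PiM {..<d i} (\<lambda>_. density lborel std_normal_density)"

definition centered_nondeg_gaussian :: "(nat \<Rightarrow> nat) \<Rightarrow> nat \<Rightarrow> (nat \<Rightarrow> real) measure \<Rightarrow> bool" where
  "centered_nondeg_gaussian d i \<mu> \<longleftrightarrow>
     (\<exists>L L' :: nat \<Rightarrow> nat \<Rightarrow> real.
        (\<forall>a<d i. \<forall>b<d i. (\<Sum>k<d i. L a k * L' k b) = (if a = b then 1 else 0)) \<and>
        \<mu> = distr (std_gauss d i) (Eb d i) (\<lambda>x. \<lambda>a\<in>{..<d i}. \<Sum>b<d i. L a b * x b))"

definition couplings :: "(nat \<Rightarrow> nat) \<Rightarrow> nat \<Rightarrow> (nat \<Rightarrow> (nat \<Rightarrow> real) measure)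
    \<Rightarrow> (nat \<Rightarrow> nat \<Rightarrow> real) measure set" where
  "couplings d n M = {\<mu>. sets \<mu> = sets (Etot d n) \<and> prob_space \<mu> \<and>
       (\<forall>i<n. distr \<mu> (Eb d i) (\<lambda>x. x i) = M i)}"

definition D_gen :: "((nat \<Rightarrow> nat) \<Rightarrow> nat \<Rightarrow> (nat \<Rightarrow> real) measure \<Rightarrow> bool)
    \<Rightarrow> (nat \<Rightarrow> nat) \<Rightarrow> nat \<Rightarrow> (nat \<Rightarrow> real) \<Rightarrow> (nat \<times> nat \<Rightarrow> nat \<times> nat \<Rightarrow> real) \<Rightarrow> ereal" where
  "D_gen cls d n c Q = Inf (ereal ` {D::real. \<forall>M. (\<forall>i<n. cls d i (M i)) \<longrightarrow>
       (\<Sum>i<n. ereal (c i) * entropy_h d i (M i))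
         \<le> (SUP \<mu>\<in>couplings d n M. ereal (\<integral>x. quad d n Q x \<partial>\<mu>)) + ereal D})"

definition D_c where "D_c = D_gen (\<lambda>d i \<mu>. in_P d i \<mu> \<and> centered d i \<mu>)"
definition D_g where "D_g = D_gen (\<lambda>d i \<mu>. in_P d i \<mu> \<and> centered_nondeg_gaussian d i \<mu>)"
definition D_s where "D_s = D_gen (\<lambda>d i \<mu>. in_P d i \<mu> \<and> symmetric_meas d i \<mu>)"

end

theory Submission
  imports Defs
begin

lemma meas_comp:
  assumes "sets \<mu> = sets (Etot d n)" "i<n"
  shows "(\<lambda>x. x i) \<in> measurable \<mu> (Eb d i)"
proof -
  have "(\<lambda>x. x i) \<in> measurable (Etot d n) (Eb d i)"
    unfolding Etot_def using assms(2) by (intro measurable_component_singleton) auto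
  then show ?thesis unfolding measurable_cong_sets[OF assms(1) refl] .
qed

lemma meas_coord:
  assumes "sets N = sets (Eb d i)" "a < d i"
  shows "(\<lambda>y. y a) \<in> borel_measurable N"
proof -
  have "(\<lambda>y. y a) \<in> measurable (Eb d i) lborel"
    unfolding Eb_def using assms(2) by (intro measurable_component_singleton) auto
  then show ?thesis unfolding measurable_cong_sets[OF assms(1) refl] by simp
qed

lemma sq_int:
  assumes P: "in_P d i (M i)" and mu: "\<mu> \<in> couplings d n M" and i: "i<n" and a: "a < d i"
  shows "integrable \<mu> (\<lambda>x. (x i a)\<^sup>2)" "(\<integral>x. (x i a)\<^sup>2 \<partial>\<mu>) = (\<integral>y. (y a)\<^sup>2 \<partial>M i)"
proof -
  have sets: "sets \<mu> = sets (Etot d n)" and dis: "distr \<mu> (Eb d i) (\<lambda>x. x i) = M i"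
    using mu i by (auto simp: couplings_def)
  have m: "(\<lambda>x. x i) \<in> measurable \<mu> (Eb d i)" using meas_comp[OF sets i] .
  have g: "(\<lambda>y. (y a)\<^sup>2) \<in> borel_measurable (Eb d i)" using meas_coord[of "Eb d i", OF refl a] by measurable
  have sM: "sets (M i) = sets (Eb d i)" using P by (simp add: in_P_def)
  have "(\<integral>\<^sup>+ y. ennreal ((y a)\<^sup>2) \<partial>M i) \<le> (\<integral>\<^sup>+ y. ennreal (\<Sum>a<d i. (y a)\<^sup>2) \<partial>M i)"
    apply (intro nn_integral_mono ennreal_leI)
    using a by (intro member_le_sum) auto
  also have "\<dots> < \<infinity>" using P by (simp add: in_P_def)
  finally have fin: "(\<integral>\<^sup>+ y. ennreal ((y a)\<^sup>2) \<partial>M i) < \<infinity>" .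
  have gM: "(\<lambda>y. (y a)\<^sup>2) \<in> borel_measurable (M i)" using meas_coord[OF sM a] by measurable
  have intM: "integrable (M i) (\<lambda>y. (y a)\<^sup>2)"
    using fin gM by (intro integrableI_nonneg) auto
  then have "integrable (distr \<mu> (Eb d i) (\<lambda>x. x i)) (\<lambda>y. (y a)\<^sup>2)" using dis by simp
  then show "integrable \<mu> (\<lambda>x. (x i a)\<^sup>2)" using integrable_distr_eq[OF m g] by simp
  show "(\<integral>x. (x i a)\<^sup>2 \<partial>\<mu>) = (\<integral>y. (y a)\<^sup>2 \<partial>M i)"
    using integral_distr[OF m g] dis by simp
qed

lemma absprod: "\<bar>u * v\<bar> \<le> u\<^sup>2 + (v::real)\<^sup>2"
proof -
  have "0 \<le> (\<bar>u\<bar> - \<bar>v\<bar>)\<^sup>2" by simp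
  then have "2 * (\<bar>u\<bar> * \<bar>v\<bar>) \<le> u\<^sup>2 + v\<^sup>2"
    by (simp add: power2_eq_square algebra_simps)
  moreover have "0 \<le> \<bar>u\<bar> * \<bar>v\<bar>" by simp
  moreover have "\<bar>u * v\<bar> = \<bar>u\<bar> * \<bar>v\<bar>" by (simp add: abs_mult)
  ultimately show ?thesis by linarith
qed

lemma prod_int:
  assumes P: "\<forall>i<n. in_P d i (M i)" and mu: "\<mu> \<in> couplings d n M"
    and i: "i<n" and a: "a < d i" and j: "j<n" and b: "b < d j"
  shows "integrable \<mu> (\<lambda>x. x i a * C * x j b)"
proof -
  have sets: "sets \<mu> = sets (Etot d n)" using mu by (auto simp: couplings_def)
  have mi: "(\<lambda>x. x i a) \<in> borel_measurable \<mu>"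
    using measurable_compose[OF meas_comp[OF sets i] meas_coord[of "Eb d i", OF refl a]] .
  have mj: "(\<lambda>x. x j b) \<in> borel_measurable \<mu>"
    using measurable_compose[OF meas_comp[OF sets j] meas_coord[of "Eb d j", OF refl b]] .
  have gi: "integrable \<mu> (\<lambda>x. \<bar>C\<bar> * ((x i a)\<^sup>2 + (x j b)\<^sup>2))"
    using sq_int(1)[OF P[rule_format, OF i] mu i a] sq_int(1)[OF P[rule_format, OF j] mu j b]
    by auto
  show ?thesis
  proof (rule Bochner_Integration.integrable_bound[OF gi])
    show "(\<lambda>x. x i a * C * x j b) \<in> borel_measurable \<mu>" using mi mj by measurable
    show "AE x in \<mu>. norm (x i a * C * x j b) \<le> norm (\<bar>C\<bar> * ((x i a)\<^sup>2 + (x j b)\<^sup>2))"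
    proof (intro AE_I2)
      fix x :: "nat \<Rightarrow> nat \<Rightarrow> real"
      have "\<bar>x i a * x j b\<bar> \<le> (x i a)\<^sup>2 + (x j b)\<^sup>2"
        by (rule absprod)
      then have "\<bar>C\<bar> * \<bar>x i a * x j b\<bar> \<le> \<bar>C\<bar> * ((x i a)\<^sup>2 + (x j b)\<^sup>2)"
        by (intro mult_left_mono) auto
      then show "norm (x i a * C * x j b) \<le> norm (\<bar>C\<bar> * ((x i a)\<^sup>2 + (x j b)\<^sup>2))"
        by (simp add: abs_mult mult_ac)
    qed
  qed
qed

lemma quad_int:
  assumes P: "\<forall>i<n. in_P d i (M i)" and mu: "\<mu> \<in> couplings d n M"
  shows "integrable \<mu> (quad d n Q)"
  unfolding quad_def
  by (intro Bochner_Integration.integrable_sum prod_int[OF P mu]) auto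

definition sqn :: "(nat \<Rightarrow> nat) \<Rightarrow> nat \<Rightarrow> (nat \<Rightarrow> nat \<Rightarrow> real) \<Rightarrow> real" where
  "sqn d n x = (\<Sum>i<n. \<Sum>a<d i. (x i a)\<^sup>2)"

lemma quad_shift: "quad d n (shift_id Q \<delta>) x = quad d n Q x + \<delta> * sqn d n x"
proof -
  have "quad d n (shift_id Q \<delta>) x = quad d n Q x +
     (\<Sum>i<n. \<Sum>a<d i. \<Sum>j<n. \<Sum>b<d j. x i a * (if (i,a) = (j,b) then \<delta> else 0) * x j b)"
    unfolding quad_def shift_id_def by (simp add: algebra_simps sum.distrib)
  also have "(\<Sum>i<n. \<Sum>a<d i. \<Sum>j<n. \<Sum>b<d j. x i a * (if (i,a) = (j,b) then \<delta> else 0) * x j b)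
     = (\<Sum>i<n. \<Sum>a<d i. \<delta> * (x i a)\<^sup>2)"
  proof (intro sum.cong refl)
    fix i a assume "i \<in> {..<n}" "a \<in> {..<d i}"
    then show "(\<Sum>j<n. \<Sum>b<d j. x i a * (if (i,a) = (j,b) then \<delta> else 0) * x j b) = \<delta> * (x i a)\<^sup>2"
    proof -
      assume ia: "i \<in> {..<n}" "a \<in> {..<d i}"
      have "(\<Sum>j<n. \<Sum>b<d j. x i a * (if (i,a) = (j,b) then \<delta> else 0) * x j b)
          = (\<Sum>j<n. if j = i then \<delta> * (x i a)\<^sup>2 else 0)"
      proof (rule sum.cong[OF refl])
        fix j assume "j \<in> {..<n}"
        show "(\<Sum>b<d j. x i a * (if (i,a) = (j,b) then \<delta> else 0) * x j b) = (if j = i then \<delta> * (x i a)\<^sup>2 else 0)"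
        proof (cases "j = i")
          case True
          have "(\<Sum>b<d j. x i a * (if (i,a) = (j,b) then \<delta> else 0) * x j b)
              = (\<Sum>b<d i. if a = b then \<delta> * (x i a)\<^sup>2 else 0)"
            using True by (intro sum.cong refl) (auto simp: power2_eq_square)
          also have "\<dots> = \<delta> * (x i a)\<^sup>2" using ia by (simp add: sum.delta)
          finally show ?thesis using True by simp
        qed auto
      qed
      also have "\<dots> = \<delta> * (x i a)\<^sup>2" using ia by (simp add: sum.delta')
      finally show ?thesis .
    qed
  qed
  finally show ?thesis by (simp add: sqn_def sum_distrib_left)
qed

definition mm :: "(nat \<Rightarrow> nat) \<Rightarrow> nat \<Rightarrow> (nat \<Rightarrow> (nat \<Rightarrow> real) measure) \<Rightarrow> real" where
  "mm d n M = (\<Sum>i<n. \<Sum>a<d i. \<integral>y. (y a)\<^sup>2 \<partial>M i)"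

lemma mm_nonneg: "mm d n M \<ge> 0"
  unfolding mm_def by (intro sum_nonneg Bochner_Integration.integral_nonneg) auto

lemma int_shift:
  assumes P: "\<forall>i<n. in_P d i (M i)" and mu: "\<mu> \<in> couplings d n M"
  shows "(\<integral>x. quad d n (shift_id Q \<delta>) x \<partial>\<mu>) = (\<integral>x. quad d n Q x \<partial>\<mu>) + \<delta> * mm d n M"
proof -
  have isq: "integrable \<mu> (\<lambda>x. (x i a)\<^sup>2)" if "i < n" "a < d i" for i a
    using sq_int(1)[OF P[rule_format, OF that(1)] mu that] .
  have isqn: "integrable \<mu> (sqn d n)" unfolding sqn_def
    using isq by (intro Bochner_Integration.integrable_sum) auto
  have "(\<integral>x. sqn d n x \<partial>\<mu>) = (\<Sum>i<n. \<Sum>a<d i. \<integral>x. (x i a)\<^sup>2 \<partial>\<mu>)"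
    unfolding sqn_def
    by (subst Bochner_Integration.integral_sum, use isq in \<open>auto intro!: Bochner_Integration.integrable_sum\<close>)
  also have "\<dots> = mm d n M" unfolding mm_def
    using sq_int(2)[OF P[rule_format] mu] by (intro sum.cong refl) auto
  finally have e: "(\<integral>x. sqn d n x \<partial>\<mu>) = mm d n M" .
  have "(\<integral>x. quad d n (shift_id Q \<delta>) x \<partial>\<mu>) = (\<integral>x. quad d n Q x + \<delta> * sqn d n x \<partial>\<mu>)"
    by (simp add: quad_shift)
  also have "\<dots> = (\<integral>x. quad d n Q x \<partial>\<mu>) + \<delta> * (\<integral>x. sqn d n x \<partial>\<mu>)"
    using quad_int[OF P mu] isqn by simp
  finally show ?thesis using e by simp
qed

definition SS where "SS d n Q M = (SUP \<mu>\<in>couplings d n M. ereal (\<integral>x. quad d n Q x \<partial>\<mu>))"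
definition LL where "LL d n c M = (\<Sum>i<n. ereal (c i) * entropy_h d i (M i))"
definition AA where "AA cls d n c Q = {D::real. \<forall>M. (\<forall>i<n. cls d i (M i)) \<longrightarrow> LL d n c M \<le> SS d n Q M + ereal D}"

lemma D_gen_eq: "D_gen cls d n c Q = Inf (ereal ` AA cls d n c Q)"
  unfolding D_gen_def AA_def SS_def LL_def ..

lemma shift0: "shift_id Q 0 = Q" by (auto simp: shift_id_def fun_eq_iff)

lemma SS_mono:
  assumes P: "\<forall>i<n. in_P d i (M i)" and le: "\<delta>1 \<le> \<delta>2"
  shows "SS d n (shift_id Q \<delta>1) M \<le> SS d n (shift_id Q \<delta>2) M"
  unfolding SS_def
proof (rule SUP_mono)
  fix \<mu> assume mu: "\<mu> \<in> couplings d n M"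
  have "\<delta>1 * mm d n M \<le> \<delta>2 * mm d n M" using le mm_nonneg by (intro mult_right_mono) auto
  then have "ereal (\<integral>x. quad d n (shift_id Q \<delta>1) x \<partial>\<mu>) \<le> ereal (\<integral>x. quad d n (shift_id Q \<delta>2) x \<partial>\<mu>)"
    using int_shift[OF P mu] by simp
  then show "\<exists>m\<in>couplings d n M. ereal (\<integral>x. quad d n (shift_id Q \<delta>1) x \<partial>\<mu>) \<le> ereal (\<integral>x. quad d n (shift_id Q \<delta>2) x \<partial>m)"
    using mu by blast
qed

lemma SS_upper:
  assumes P: "\<forall>i<n. in_P d i (M i)"
  shows "SS d n (shift_id Q \<delta>) M \<le> SS d n Q M + ereal (\<delta> * mm d n M)"
  unfolding SS_def
proof (rule SUP_least)
  fix \<mu> assume mu: "\<mu> \<in> couplings d n M"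
  have "ereal (\<integral>x. quad d n (shift_id Q \<delta>) x \<partial>\<mu>) = ereal (\<integral>x. quad d n Q x \<partial>\<mu>) + ereal (\<delta> * mm d n M)"
    using int_shift[OF P mu] by simp
  also have "\<dots> \<le> (SUP \<mu>\<in>couplings d n M. ereal (\<integral>x. quad d n Q x \<partial>\<mu>)) + ereal (\<delta> * mm d n M)"
    using mu by (intro add_right_mono SUP_upper)
  finally show "ereal (\<integral>x. quad d n (shift_id Q \<delta>) x \<partial>\<mu>) \<le> (SUP \<mu>\<in>couplings d n M. ereal (\<integral>x. quad d n Q x \<partial>\<mu>)) + ereal (\<delta> * mm d n M)" .
qed

lemma D_mono:
  assumes cls: "\<And>i \<mu>. cls d i \<mu> \<Longrightarrow> in_P d i \<mu>" and le: "\<delta>1 \<le> \<delta>2"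
  shows "D_gen cls d n c (shift_id Q \<delta>2) \<le> D_gen cls d n c (shift_id Q \<delta>1)"
  unfolding D_gen_eq
proof (intro Inf_superset_mono image_mono subsetI)
  fix D assume "D \<in> AA cls d n c (shift_id Q \<delta>1)"
  then have h: "\<forall>M. (\<forall>i<n. cls d i (M i)) \<longrightarrow> LL d n c M \<le> SS d n (shift_id Q \<delta>1) M + ereal D"
    by (simp add: AA_def)
  show "D \<in> AA cls d n c (shift_id Q \<delta>2)" unfolding AA_def
  proof (intro CollectI allI impI)
    fix M assume M: "\<forall>i<n. cls d i (M i)"
    then have P: "\<forall>i<n. in_P d i (M i)" using cls by blast
    have "LL d n c M \<le> SS d n (shift_id Q \<delta>1) M + ereal D" using h M by blast
    also have "\<dots> \<le> SS d n (shift_id Q \<delta>2) M + ereal D"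
      using SS_mono[OF P le] by (intro add_right_mono)
    finally show "LL d n c M \<le> SS d n (shift_id Q \<delta>2) M + ereal D" .
  qed
qed

lemma AA_up: "D \<in> AA cls d n c Q \<Longrightarrow> D \<le> D' \<Longrightarrow> D' \<in> AA cls d n c Q"
proof -
  assume a: "D \<in> AA cls d n c Q" and le: "D \<le> D'"
  show ?thesis unfolding AA_def
  proof (intro CollectI allI impI)
    fix M assume M: "\<forall>i<n. cls d i (M i)"
    have "LL d n c M \<le> SS d n Q M + ereal D" using a M unfolding AA_def by blast
    also have "\<dots> \<le> SS d n Q M + ereal D'" using le by (intro add_left_mono) simp
    finally show "LL d n c M \<le> SS d n Q M + ereal D'" .
  qed
qed

lemma D_lim:
  assumes cls: "\<And>i \<mu>. cls d i \<mu> \<Longrightarrow> in_P d i \<mu>"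
  shows "((\<lambda>\<delta>. D_gen cls d n c (shift_id Q \<delta>)) \<longlongrightarrow> D_gen cls d n c Q) (at_right 0)"
proof (rule order_tendstoI)
  fix z assume z: "D_gen cls d n c Q < z"
  show "\<forall>\<^sub>F \<delta> in at_right 0. D_gen cls d n c (shift_id Q \<delta>) < z"
    using eventually_at_right_less[of "0::real"]
  proof (rule eventually_mono)
    fix \<delta> :: real assume "0 < \<delta>"
    then have "D_gen cls d n c (shift_id Q \<delta>) \<le> D_gen cls d n c (shift_id Q 0)"
      by (intro D_mono cls) auto
    then show "D_gen cls d n c (shift_id Q \<delta>) < z" using z by (simp add: shift0)
  qed
next
  fix y assume y: "y < D_gen cls d n c Q"
  obtain r where r: "y < ereal r" "ereal r < D_gen cls d n c Q" using ereal_dense2[OF y] by blast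
  obtain r' where r': "y < ereal r'" "ereal r' < ereal r" using ereal_dense2[OF r(1)] by blast
  have "r \<notin> AA cls d n c Q"
  proof
    assume "r \<in> AA cls d n c Q"
    then have "D_gen cls d n c Q \<le> ereal r" unfolding D_gen_eq by (intro Inf_lower) auto
    then show False using r(2) by simp
  qed
  then obtain M where M: "\<forall>i<n. cls d i (M i)" and nl: "\<not> LL d n c M \<le> SS d n Q M + ereal r"
    unfolding AA_def by blast
  have P: "\<forall>i<n. in_P d i (M i)" using M cls by blast
  define K where "K = mm d n M"
  have K0: "K \<ge> 0" unfolding K_def by (rule mm_nonneg)
  have rr: "r' < r" using r' by simp
  have ev: "\<forall>\<^sub>F \<delta> in at_right 0. \<delta> * K < r - r'"
    unfolding eventually_at_right_field
  proof (intro exI[of _ "(r - r') / (K + 1)"] conjI allI impI)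
    show "0 < (r - r') / (K + 1)" using rr K0 by simp
    fix \<delta> :: real assume d0: "0 < \<delta>" and db: "\<delta> < (r - r') / (K + 1)"
    then have "\<delta> * (K + 1) < r - r'" using K0 by (simp add: field_simps)
    moreover have "\<delta> * K \<le> \<delta> * (K + 1)" using d0 by simp
    ultimately show "\<delta> * K < r - r'" by linarith
  qed
  show "\<forall>\<^sub>F \<delta> in at_right 0. y < D_gen cls d n c (shift_id Q \<delta>)"
    using ev
  proof (rule eventually_mono)
    fix \<delta> :: real assume dK: "\<delta> * K < r - r'"
    have "ereal r' \<le> D_gen cls d n c (shift_id Q \<delta>)" unfolding D_gen_eq
    proof (rule Inf_greatest)
      fix e assume "e \<in> ereal ` AA cls d n c (shift_id Q \<delta>)"
      then obtain D' where D': "D' \<in> AA cls d n c (shift_id Q \<delta>)" and e: "e = ereal D'" by blast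
      show "ereal r' \<le> e"
      proof (rule ccontr)
        assume "\<not> ereal r' \<le> e"
        then have Dr: "D' < r'" using e by simp
        have "LL d n c M \<le> SS d n (shift_id Q \<delta>) M + ereal D'"
          using D' M unfolding AA_def by blast
        also have "\<dots> \<le> SS d n Q M + ereal (\<delta> * K) + ereal D'"
          using SS_upper[OF P, of Q \<delta>] unfolding K_def by (intro add_right_mono)
        also have "\<dots> = SS d n Q M + ereal (\<delta> * K + D')" by (simp add: add.assoc)
        also have "\<dots> \<le> SS d n Q M + ereal r"
          using dK Dr by (intro add_left_mono) simp
        finally show False using nl by simp
      qed
    qed
    then show "y < D_gen cls d n c (shift_id Q \<delta>)" using less_le_trans[OF r'(1)] by blast
  qed
qed

lemma all3:
  assumes cls: "\<And>i \<mu>. cls d i \<mu> \<Longrightarrow> in_P d i \<mu>"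
  shows "(\<forall>\<delta>>0. D_gen cls d n c (shift_id Q \<delta>) \<le> D_gen cls d n c Q)
         \<and> ((\<lambda>\<delta>. D_gen cls d n c (shift_id Q \<delta>)) \<longlongrightarrow> D_gen cls d n c Q) (at_right 0)
         \<and> (\<forall>\<delta>1 \<delta>2. 0 \<le> \<delta>1 \<and> \<delta>1 \<le> \<delta>2 \<longrightarrow> D_gen cls d n c (shift_id Q \<delta>2) \<le> D_gen cls d n c (shift_id Q \<delta>1))"
proof (intro conjI allI impI)
  fix \<delta> :: real assume "\<delta> > 0"
  then have "D_gen cls d n c (shift_id Q \<delta>) \<le> D_gen cls d n c (shift_id Q 0)"
    by (intro D_mono[OF cls]) auto
  then show "D_gen cls d n c (shift_id Q \<delta>) \<le> D_gen cls d n c Q"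
    by (simp add: shift0)
next
  show "((\<lambda>\<delta>. D_gen cls d n c (shift_id Q \<delta>)) \<longlongrightarrow> D_gen cls d n c Q) (at_right 0)"
    by (rule D_lim[OF cls])
next
  fix \<delta>1 \<delta>2 :: real assume "0 \<le> \<delta>1 \<and> \<delta>1 \<le> \<delta>2"
  then show "D_gen cls d n c (shift_id Q \<delta>2) \<le> D_gen cls d n c (shift_id Q \<delta>1)"
    using D_mono[OF cls] by blast
qed

theorem lemma8:
  fixes d :: "nat \<Rightarrow> nat" and n :: nat and c :: "nat \<Rightarrow> real"
    and Q :: "nat \<times> nat \<Rightarrow> nat \<times> nat \<Rightarrow> real"
  assumes "n \<ge> 1" and "\<forall>i<n. d i \<ge> 1"
    and "\<forall>i<n. c i > 0"
    and "symmetric_map d n Q"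
  shows "\<forall>DD \<in> {D_c, D_g, D_s}.
           (\<forall>\<delta>>0. DD d n c (shift_id Q \<delta>) \<le> DD d n c Q)
         \<and> ((\<lambda>\<delta>. DD d n c (shift_id Q \<delta>)) \<longlongrightarrow> DD d n c Q) (at_right 0)
         \<and> (\<forall>\<delta>1 \<delta>2. 0 \<le> \<delta>1 \<and> \<delta>1 \<le> \<delta>2 \<longrightarrow> DD d n c (shift_id Q \<delta>2) \<le> DD d n c (shift_id Q \<delta>1))"
  unfolding D_c_def D_g_def D_s_def
  by (intro ballI, elim insertE emptyE; simp only:; rule all3; simp)

end
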